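(* Let $\delta\in(0,1)$ and $0\le p<\delta$. Then for every $n\ge1$ and every nonempty $\mathcal{A}_n\subseteq\{+,-\}^n$, the frame erasure rate satisfies $P_e(\mathcal{A}_n)>p$, whereas uncoded transmission ($n=0$) has frame erasure rate $p$. Consequently, for any finite set $\mathcal N=\{0,1,\dots,n_{\max}\}$ and any choice of nonempty information sets, $\arg\min_{n\in\mathcal N}P_e(\mathcal A_n)=0$.
   Context: Random erasure-indicator vectors $\mathbf{E}_{s,\delta}=(E^{(\mathbf{u})}_{s,\delta})_{\mathbf{u}\in\{+,-\}^s}$ are defined recursively: $E^{(\emptyset)}_{0,\delta}\sim$ Bernoulli$(p)$; given $\mathbf{E}_{s-1,\delta}$, take two independent copies $\mathbf{E}',\mathbf{E}''$ and i.i.d. Bernoulli$(\delta)$ variables $\Delta^{(\mathbf{u})}_s$ independent of them; for $\mathbf{t}\in\{+,-\}^{s-1}$ with $A=E'^{(\mathbf{t})}+E''^{(\mathbf{t})}-E'^{(\mathbf{t})}E''^{(\mathbf{t})}$ and $B=E'^{(\mathbf{t})}E''^{(\mathbf{t})}$, set $E^{(\mathbf{t}-)}_{s,\delta}=A+(1-A)\Delta^{(\mathbf{t}-)}_s$ and $E^{(\mathbf{t}+)}_{s,\delta}=B+(1-B)\Delta^{(\mathbf{t}+)}_s$. For a polar code of length $2^n$ over BEC$(p)$ with information set $\mathcal{A}_n\subseteq\{+,-\}^n$, decoded by a faulty SC decoder whose internal messages are independently erased with probability $\delta$, the frame erasure rate is $P_e(\mathcal{A}_n)=\Pr\big(\exists\,\mathbf{s}\in\mathcal{A}_n: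 E^{(\mathbf{s})}_{n,\delta}=1\big)$; for $n=0$ (uncoded transmission) it equals $p$. *)

theory Defs
  imports "HOL-Probability.Probability"
begin

datatype sign = Plus | Minus

text \<open>Index vectors u in {+,-}^s are lists of length s; t- / t+ is t with the sign appended.
  A realisation of E_{s,delta} is a function bool-valued on lists of length s
  (True = erased), extended by False elsewhere.\<close>

definition idx :: "nat \<Rightarrow> sign list set" where
  "idx s = {u. length u = s}"

primrec Evec :: "real \<Rightarrow> real \<Rightarrow> nat \<Rightarrow> (sign list \<Rightarrow> bool) pmf" where
  "Evec p \<delta> 0 = map_pmf (\<lambda>b u. if u = [] then b else False) (bernoulli_pmf p)"
| "Evec p \<delta> (Suc s) =
     do { E1 \<leftarrow> Evec p \<delta> s;
          E2 \<leftarrow> Evec p \<delta> s;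
          D \<leftarrow> Pi_pmf (idx (Suc s)) False (\<lambda>_. bernoulli_pmf \<delta>);
          return_pmf (\<lambda>u. if length u = Suc s then
             (let t = butlast u; A = E1 t \<or> E2 t; B = E1 t \<and> E2 t in
               if last u = Minus then A \<or> D u else B \<or> D u)
           else False) }"

definition FER :: "real \<Rightarrow> real \<Rightarrow> nat \<Rightarrow> sign list set \<Rightarrow> real" where
  "FER p \<delta> n A = measure_pmf.prob (Evec p \<delta> n) {e. \<exists>s\<in>A. e s}"

end

theory Submission
  imports Defs
begin

lemma bind_ge:
  assumes "\<And>x. x \<in> set_pmf M \<Longrightarrow> c \<le> emeasure (measure_pmf (N x)) X"
  shows "c \<le> emeasure (measure_pmf (bind_pmf M N)) X"
  unfolding emeasure_bind_pmf
  by (rule measure_pmf.nn_integral_ge_const) (auto intro!: AE_pmfI assms)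

lemma fin_idx: "finite (idx n)"
proof -
  have "idx n = {xs. set xs \<subseteq> (UNIV :: sign set) \<and> length xs = n}" by (auto simp: idx_def)
  moreover have "finite (UNIV :: sign set)"
  proof -
    have "(UNIV :: sign set) = {Plus, Minus}" using sign.exhaust by auto
    thus ?thesis by (metis finite.emptyI finite_insert)
  qed
  ultimately show ?thesis using finite_lists_length_eq by metis
qed

lemma D_prob:
  assumes "0 \<le> d" "d \<le> 1" "u \<in> idx n"
  shows "emeasure (measure_pmf (Pi_pmf (idx n) False (\<lambda>_. bernoulli_pmf d))) {D. D u} = ennreal d"
proof -
  have "emeasure (measure_pmf (Pi_pmf (idx n) False (\<lambda>_. bernoulli_pmf d))) {D. D u}
      = emeasure (measure_pmf (map_pmf (\<lambda>D. D u) (Pi_pmf (idx n) False (\<lambda>_. bernoulli_pmf d)))) {True}"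
    by (simp add: vimage_def)
  also have "\<dots> = emeasure (measure_pmf (bernoulli_pmf d)) {True}"
    using Pi_pmf_component[OF fin_idx[of n], where x=u and dflt=False and p="\<lambda>_. bernoulli_pmf d"] assms by simp
  also have "\<dots> = ennreal d" using assms by (simp add: emeasure_pmf_single)
  finally show ?thesis .
qed

lemma E_ge:
  assumes "0 \<le> d" "d \<le> 1" "length u = Suc s"
  shows "ennreal d \<le> emeasure (measure_pmf (Evec p d (Suc s))) {e. e u}"
  unfolding Evec.simps
proof (rule bind_ge, rule bind_ge)
  fix E1 E2
  let ?g = "(\<lambda>D u. if length u = Suc s then
             (let t = butlast u; A = E1 t \<or> E2 t; B = E1 t \<and> E2 t in
               if last u = Minus then A \<or> D u else B \<or> D u)
           else False)"
  have "ennreal d = emeasure (measure_pmf (Pi_pmf (idx (Suc s)) False (\<lambda>_. bernoulli_pmf d))) {D. D u}"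
    using D_prob assms by (simp add: idx_def)
  also have "\<dots> = (\<integral>\<^sup>+D. indicator {D. D u} D \<partial>measure_pmf (Pi_pmf (idx (Suc s)) False (\<lambda>_. bernoulli_pmf d)))"
    by simp
  also have "\<dots> \<le> (\<integral>\<^sup>+D. indicator {e. e u} (?g D) \<partial>measure_pmf (Pi_pmf (idx (Suc s)) False (\<lambda>_. bernoulli_pmf d)))"
    by (rule nn_integral_mono) (auto simp: indicator_def assms Let_def)
  also have "\<dots> = emeasure (measure_pmf (Pi_pmf (idx (Suc s)) False (\<lambda>_. bernoulli_pmf d) \<bind> (\<lambda>D. return_pmf (?g D)))) {e. e u}"
    by simp
  finally show "ennreal d \<le> emeasure (measure_pmf (Pi_pmf (idx (Suc s)) False (\<lambda>_. bernoulli_pmf d) \<bind> (\<lambda>D. return_pmf (?g D)))) {e. e u}" .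
qed

lemma FER_pos:
  assumes "0 \<le> d" "d \<le> 1" "n \<ge> 1" "A \<noteq> {}" "A \<subseteq> idx n"
  shows "d \<le> FER p d n A"
proof -
  obtain u where u: "u \<in> A" using assms by auto
  obtain s where n: "n = Suc s" using assms by (cases n) auto
  have lu: "length u = Suc s" using u assms n by (auto simp: idx_def)
  have "ennreal d \<le> emeasure (measure_pmf (Evec p d n)) {e. e u}" using E_ge[OF assms(1,2) lu] n by simp
  also have "\<dots> \<le> emeasure (measure_pmf (Evec p d n)) {e. \<exists>s\<in>A. e s}"
    by (rule emeasure_mono) (use u in auto)
  finally have "ennreal d \<le> ennreal (FER p d n A)"
    by (simp add: FER_def measure_pmf.emeasure_eq_measure)
  moreover have "0 \<le> FER p d n A" by (simp add: FER_def)
  ultimately show ?thesis by (simp add: ennreal_le_iff)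
qed

lemma FER0:
  assumes "0 \<le> p" "p \<le> 1"
  shows "FER p d 0 {[]} = p"
proof -
  have "FER p d 0 {[]} = measure_pmf.prob (map_pmf (\<lambda>b (u::sign list). if u = [] then b else False) (bernoulli_pmf p)) {e. e []}"
    by (simp add: FER_def)
  also have "\<dots> = measure_pmf.prob (bernoulli_pmf p) {True}"
  proof -
    have "{x::bool. x} = {True}" by auto
    thus ?thesis by (simp add: vimage_def)
  qed
  also have "\<dots> = p" using assms by (simp add: measure_pmf_single)
  finally show ?thesis .
qed

theorem proposition7:
  fixes p \<delta> :: real
  assumes "0 < \<delta>" "\<delta> < 1" "0 \<le> p" "p < \<delta>"
  shows "(\<forall>n \<ge> 1. \<forall>A. A \<noteq> {} \<and> A \<subseteq> idx n \<longrightarrow> FER p \<delta> n A > p)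
       \<and> FER p \<delta> 0 {[]} = p
       \<and> (\<forall>nmax (As :: nat \<Rightarrow> sign list set).
            (\<forall>n \<le> nmax. As n \<noteq> {} \<and> As n \<subseteq> idx n) \<longrightarrow>
            {n \<in> {0..nmax}. \<forall>m \<in> {0..nmax}. FER p \<delta> n (As n) \<le> FER p \<delta> m (As m)} = {0})"
proof -
  have P1: "\<forall>n \<ge> 1. \<forall>A. A \<noteq> {} \<and> A \<subseteq> idx n \<longrightarrow> FER p \<delta> n A > p"
  proof (intro allI impI)
    fix n A assume "1 \<le> n" "A \<noteq> {} \<and> A \<subseteq> idx n"
    hence "\<delta> \<le> FER p \<delta> n A" using FER_pos[of \<delta> n A p] assms(1,2) by simp
    thus "FER p \<delta> n A > p" using assms by linarith
  qed
  have P2: "FER p \<delta> 0 {[]} = p" using FER0[of p \<delta>] assms(2,3,4) by linarith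
  have P3: "{n \<in> {0..nmax}. \<forall>m \<in> {0..nmax}. FER p \<delta> n (As n) \<le> FER p \<delta> m (As m)} = {0}"
    if h: "\<forall>n \<le> nmax. As n \<noteq> {} \<and> As n \<subseteq> idx n" for nmax As
  proof -
    have h0: "As 0 \<noteq> {}" "As 0 \<subseteq> idx 0" using h by blast+
    have i0: "idx 0 = {[]}" by (auto simp: idx_def)
    have "As 0 = {[]}" using h0 unfolding i0 by (simp add: subset_singleton_iff)
    hence A0: "FER p \<delta> 0 (As 0) = p" using P2 by simp
    have gt: "FER p \<delta> n (As n) > p" if "1 \<le> n" "n \<le> nmax" for n
    proof -
      have "As n \<noteq> {} \<and> As n \<subseteq> idx n" using h that(2) by simp
      thus ?thesis using P1 that(1) by simp
    qed
    show ?thesis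
    proof (rule set_eqI, rule iffI)
      fix n assume "n \<in> {n \<in> {0..nmax}. \<forall>m \<in> {0..nmax}. FER p \<delta> n (As n) \<le> FER p \<delta> m (As m)}"
      hence nn: "n \<le> nmax" and le: "FER p \<delta> n (As n) \<le> FER p \<delta> 0 (As 0)" by simp_all
      show "n \<in> {0}"
      proof (rule ccontr)
        assume "n \<notin> {0}"
        hence "1 \<le> n" by simp
        from gt[OF this nn] le A0 show False by linarith
      qed
    next
      fix n assume "n \<in> {0::nat}"
      hence n0: "n = 0" by simp
      have "FER p \<delta> 0 (As 0) \<le> FER p \<delta> m (As m)" if "m \<in> {0..nmax}" for m
      proof (cases "m = 0")
        case False
        hence "1 \<le> m" by simp
        have "m \<le> nmax" using that by simp
        from gt[OF \<open>1 \<le> m\<close> this] A0 show ?thesis by linarith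
      qed simp
      thus "n \<in> {n \<in> {0..nmax}. \<forall>m \<in> {0..nmax}. FER p \<delta> n (As n) \<le> FER p \<delta> m (As m)}"
        using n0 by simp
    qed
  qed
  have P3': "\<forall>nmax (As :: nat \<Rightarrow> sign list set).
            (\<forall>n \<le> nmax. As n \<noteq> {} \<and> As n \<subseteq> idx n) \<longrightarrow>
            {n \<in> {0..nmax}. \<forall>m \<in> {0..nmax}. FER p \<delta> n (As n) \<le> FER p \<delta> m (As m)} = {0}"
    by (intro allI impI, rule P3)
  show ?thesis using P1 P2 P3' by (rule conjI[OF _ conjI])
qed

end
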